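(* Let $X$ and $Y$ be random variables having the same support, and let $\mathbf{q}=(q_1,q_2)$, where $q_i:[0,1]\to[0,1]$, $i=1,2$, are distortion functions such that $\hat G_X(\mathbf q)$ and $\hat G_Y(\mathbf q)$ are finite. Then: 1. $\hat G_{X+\delta}(\mathbf q)=\hat G_X(\mathbf q)$ for all $\delta\in\mathbb{R}$; 2. $\hat G_{\gamma X}(\mathbf q)=\gamma\hat G_X(\mathbf q)$ for all $\gamma>0$; 3. $\hat G_X(\mathbf q)=0$ for any degenerate random variable $X$; 4. $\hat G_X(\mathbf q)\ge0$ for any random variable $X$; 5. $X\le_d Y$ implies $\hat G_X(\mathbf q)\le\hat G_Y(\mathbf q)$.
   Context: A distortion function is an increasing (non-strict) function $q:[0,1]\to[0,1]$ with $q(0)=0$ and $q(1)=1$. For a random variable $X$ with CDF $F$ and survival function $\overline F=1-F$, with $l=\inf\{x:F(x)>0\}$ and $r=\sup\{x:\overline F(x)>0\}$, the $\mathbf q$-distorted Gini function is $\hat G_X(\mathbf q)=\int_l^r q_1(F(x))\,q_2(\overline F(x))\,dx$. With $F^{-1}(u)=\sup\{x:F(x)\le u\}$ and $G^{-1}$ the analogous quantile function of $Y$ (CDF $G$), $X$ is smaller than $Y$ in the dispersive order, $X\le_d Y$, iff $F^{-1}(v)-F^{-1}(u)\le G^{-1}(v)-G^{-1}(u)$ whenever $0<u\le v<1$. *)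

theory Defs
  imports "HOL-Probability.Probability"
begin

definition distortion :: "(real \<Rightarrow> real) \<Rightarrow> bool" where
  "distortion q \<longleftrightarrow> mono_on {0..1} q \<and> q ` {0..1} \<subseteq> {0..1} \<and> q 0 = 0 \<and> q 1 = 1"

definition cdfX :: "'a measure \<Rightarrow> ('a \<Rightarrow> real) \<Rightarrow> real \<Rightarrow> real" where
  "cdfX M X x = measure M {\<omega> \<in> space M. X \<omega> \<le> x}"

definition lend :: "'a measure \<Rightarrow> ('a \<Rightarrow> real) \<Rightarrow> ereal" where
  "lend M X = Inf {ereal x | x. cdfX M X x > 0}"

definition rend :: "'a measure \<Rightarrow> ('a \<Rightarrow> real) \<Rightarrow> ereal" where
  "rend M X = Sup {ereal x | x. 1 - cdfX M X x > 0}"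

definition Gini_nn :: "(real \<Rightarrow> real) \<Rightarrow> (real \<Rightarrow> real) \<Rightarrow> 'a measure \<Rightarrow> ('a \<Rightarrow> real) \<Rightarrow> ennreal" where
  "Gini_nn q1 q2 M X =
     (\<integral>\<^sup>+ x \<in> {x. lend M X < ereal x \<and> ereal x < rend M X}.
        ennreal (q1 (cdfX M X x) * q2 (1 - cdfX M X x)) \<partial>lborel)"

text \<open>Its real value (meaningful when finite).\<close>
definition Gini :: "(real \<Rightarrow> real) \<Rightarrow> (real \<Rightarrow> real) \<Rightarrow> 'a measure \<Rightarrow> ('a \<Rightarrow> real) \<Rightarrow> real" where
  "Gini q1 q2 M X = enn2real (Gini_nn q1 q2 M X)"

definition quantile :: "'a measure \<Rightarrow> ('a \<Rightarrow> real) \<Rightarrow> real \<Rightarrow> real" where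
  "quantile M X u = Sup {x. cdfX M X x \<le> u}"

definition dispersive_le :: "'a measure \<Rightarrow> ('a \<Rightarrow> real) \<Rightarrow> 'b measure \<Rightarrow> ('b \<Rightarrow> real) \<Rightarrow> bool" where
  "dispersive_le M X N Y \<longleftrightarrow>
     (\<forall>u v. 0 < u \<and> u \<le> v \<and> v < 1 \<longrightarrow>
        quantile M X v - quantile M X u \<le> quantile N Y v - quantile N Y u)"

definition supportX :: "'a measure \<Rightarrow> ('a \<Rightarrow> real) \<Rightarrow> real set" where
  "supportX M X = {x. \<forall>e>0. measure M {\<omega> \<in> space M. X \<omega> \<in> {x - e<..<x + e}} > 0}"

end

theory Submission
  imports Defs
begin

lemma cdf_low:
  fixes F :: "real \<Rightarrow> real"
  assumes lim0: "(F \<longlongrightarrow> 0) at_bot" and "0 < u"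
  shows "\<exists>N. \<forall>x\<le>N. F x < u"
proof -
  have "eventually (\<lambda>x. F x < u) at_bot" using order_tendstoD(2)[OF lim0 assms(2)] .
  then show ?thesis by (simp add: eventually_at_bot_linorder)
qed

lemma cdf_high:
  fixes F :: "real \<Rightarrow> real"
  assumes lim1: "(F \<longlongrightarrow> 1) at_top" and "u < 1"
  shows "\<exists>N. \<forall>x\<ge>N. u < F x"
proof -
  have "eventually (\<lambda>x. u < F x) at_top" using order_tendstoD(1)[OF lim1 assms(2)] .
  then show ?thesis by (simp add: eventually_at_top_linorder)
qed

lemma Qset_ne:
  fixes F :: "real \<Rightarrow> real"
  assumes lim0: "(F \<longlongrightarrow> 0) at_bot" and "0 < u"
  shows "{x. F x \<le> u} \<noteq> {}"
  using cdf_low[OF assms] by (metis (mono_tags, lifting) empty_Collect_eq less_eq_real_def order_refl)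

lemma Qset_bdd:
  fixes F :: "real \<Rightarrow> real"
  assumes "mono F" and lim1: "(F \<longlongrightarrow> 1) at_top" and "u < 1"
  shows "bdd_above {x. F x \<le> u}"
proof -
  obtain N where N: "\<forall>x\<ge>N. u < F x" using cdf_high[OF lim1 assms(3)] by blast
  have "\<forall>x\<in>{x. F x \<le> u}. x \<le> N" using N by (meson le_cases not_le mem_Collect_eq)
  then show ?thesis unfolding bdd_above_def by blast
qed

lemma QA:
  fixes F :: "real \<Rightarrow> real"
  assumes "mono F" "(F \<longlongrightarrow> 1) at_top" "u < 1" "F x \<le> u"
  shows "x \<le> Sup {x. F x \<le> u}"
  by (rule cSup_upper) (use assms Qset_bdd[OF assms(1-3)] in auto)

lemma QB:
  fixes F :: "real \<Rightarrow> real"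
  assumes "mono F" "(F \<longlongrightarrow> 0) at_bot" "(F \<longlongrightarrow> 1) at_top" "0 < u" "u < 1"
    and "x < Sup {x. F x \<le> u}"
  shows "F x \<le> u"
proof -
  obtain y where "F y \<le> u" "x < y"
    using assms(6) less_cSup_iff[OF Qset_ne[OF assms(2,4)] Qset_bdd[OF assms(1,3,5)]] by auto
  then show ?thesis using assms(1) by (meson less_imp_le monoD order_trans)
qed

lemma Qmono:
  fixes F :: "real \<Rightarrow> real"
  assumes "mono F" "(F \<longlongrightarrow> 0) at_bot" "(F \<longlongrightarrow> 1) at_top" "0 < u" "u \<le> v" "v < 1"
  shows "Sup {x. F x \<le> u} \<le> Sup {x. F x \<le> v}"
  by (rule cSup_least[OF Qset_ne[OF assms(2,4)]]) (use assms QA[OF assms(1,3,6)] in auto)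

lemma Qrc:
  fixes F :: "real \<Rightarrow> real"
  assumes "mono F" "(F \<longlongrightarrow> 0) at_bot" "(F \<longlongrightarrow> 1) at_top" "0 < u" "u < 1" "e > 0"
  shows "\<exists>d>0. u + d < 1 \<and> Sup {x. F x \<le> u + d} - Sup {x. F x \<le> u} < e"
proof -
  define x where "x = Sup {x. F x \<le> u} + e/2"
  have Fx: "u < F x"
  proof (rule ccontr)
    assume "\<not> u < F x"
    then have "x \<le> Sup {x. F x \<le> u}" using QA[OF assms(1,3,5)] by auto
    then show False using assms(6) unfolding x_def by auto
  qed
  define m where "m = min (F x) 1"
  have m: "m \<le> F x" "m \<le> 1" "u < m" using Fx assms(5) unfolding m_def by auto
  define d where "d = (m - u)/2"
  have d: "d > 0" "u + d < 1" "u + d < F x" using m unfolding d_def by (auto simp: field_simps)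
  have "Sup {x. F x \<le> u + d} \<le> x"
  proof (rule cSup_least)
    show "{x. F x \<le> u + d} \<noteq> {}" using Qset_ne[OF assms(2)] d assms(4) by auto
    fix y assume "y \<in> {x. F x \<le> u + d}"
    then have "F y < F x" using d by auto
    then show "y \<le> x" using assms(1) by (metis monoD not_le order_less_imp_le not_less)
  qed
  then show ?thesis using d assms(6) unfolding x_def by (intro exI[of _ d]) auto
qed

lemma Q_Ioc:
  fixes F :: "real \<Rightarrow> real"
  assumes "mono F" "(F \<longlongrightarrow> 0) at_bot" "(F \<longlongrightarrow> 1) at_top" "0 < c" "c \<le> d" "d < 1"
  shows "emeasure (distr lborel borel F) {c<..d} = ennreal (Sup {x. F x \<le> d} - Sup {x. F x \<le> c})"
proof -
  let ?p = "Sup {x. F x \<le> c}" and ?q = "Sup {x. F x \<le> d}"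
  have Fm[measurable]: "F \<in> borel_measurable borel" using borel_measurable_mono assms(1) by blast
  have pq: "?p \<le> ?q" using Qmono[OF assms(1-4) assms(5,6)] .
  let ?S = "F -` {c<..d}"
  have S1: "{?p<..<?q} \<subseteq> ?S"
  proof
    fix x assume x: "x \<in> {?p<..<?q}"
    have "F x \<le> d" using QB[OF assms(1-3), of d x] x assms by auto
    moreover have "c < F x" using QA[OF assms(1,3), of c x] x assms by force
    ultimately show "x \<in> ?S" by auto
  qed
  have S2: "?S \<subseteq> {?p..?q}"
  proof
    fix x assume x: "x \<in> ?S"
    have "x \<le> ?q" using QA[OF assms(1,3), of d x] x assms by auto
    moreover have "\<not> x < ?p" using QB[OF assms(1-3), of c x] x assms by force
    ultimately show "x \<in> {?p..?q}" by auto
  qed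
  have Sm: "?S \<in> sets lborel" using measurable_sets_borel[OF Fm, of "{c<..d}"] by simp
  have "emeasure (distr lborel borel F) {c<..d} = emeasure lborel ?S"
    by (subst emeasure_distr) auto
  also have "\<dots> = ennreal (?q - ?p)"
  proof (rule antisym)
    show "emeasure lborel ?S \<le> ennreal (?q - ?p)"
      using emeasure_mono[OF S2, of lborel] pq by simp
    show "ennreal (?q - ?p) \<le> emeasure lborel ?S"
      using emeasure_mono[OF S1 Sm] pq by simp
  qed
  finally show ?thesis .
qed

lemma dynkin_sum:
  fixes M1 M2 P :: "real measure"
  assumes sets: "sets M1 = sets borel" "sets M2 = sets borel" "sets P = sets borel"
  and fin: "finite_measure M1" "finite_measure M2" "finite_measure P"
  and Ioc: "\<And>a b. measure M2 {a<..b} = measure M1 {a<..b} + measure P {a<..b}"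
  and univ: "measure M2 UNIV = measure M1 UNIV + measure P UNIV"
  and A: "A \<in> sets borel"
  shows "measure M2 A = measure M1 A + measure P A"
proof -
  let ?G = "range (\<lambda>(a, b). {a<..b::real})"
  have sp: "space M1 = UNIV" "space M2 = UNIV" "space P = UNIV"
    using sets[THEN sets_eq_imp_space_eq] by auto
  have sb: "sets borel = sigma_sets UNIV ?G"
    by (subst borel_sigma_sets_Ioc) (simp add: sets_measure_of)
  have IS: "Int_stable ?G" unfolding Int_stable_def
  proof (intro ballI)
    fix X Y assume "X \<in> ?G" "Y \<in> ?G"
    then obtain a b c d where "X = {a<..b}" "Y = {c<..d}" by auto
    then have "X \<inter> Y = (\<lambda>(a, b). {a<..b::real}) (max a c, min b d)" by auto
    then show "X \<inter> Y \<in> ?G" by blast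
  qed
  have PG: "?G \<subseteq> Pow UNIV" by simp
  have A': "A \<in> sigma_sets UNIV ?G" using A sb by simp
  from IS PG A' show ?thesis
  proof (induct rule: sigma_sets_induct_disjoint)
    case (basic X) then show ?case using Ioc by auto
  next
    case empty show ?case by simp
  next
    case (compl X)
    then have X: "X \<in> sets borel" using sb by simp
    have "measure M2 (UNIV - X) = measure M2 UNIV - measure M2 X"
      using finite_measure.finite_measure_compl[OF fin(2), of X] X sets sp by simp
    moreover have "measure M1 (UNIV - X) = measure M1 UNIV - measure M1 X"
      using finite_measure.finite_measure_compl[OF fin(1), of X] X sets sp by simp
    moreover have "measure P (UNIV - X) = measure P UNIV - measure P X"
      using finite_measure.finite_measure_compl[OF fin(3), of X] X sets sp by simp
    ultimately show ?case using compl(2) univ by simp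
  next
    case (union X)
    then have X: "range X \<subseteq> sets borel" using sb by simp
    have s2: "(\<lambda>i. measure M2 (X i)) sums measure M2 (\<Union>i. X i)"
      using finite_measure.finite_measure_UNION[OF fin(2), of X] X sets union(1) by simp
    have s1: "(\<lambda>i. measure M1 (X i)) sums measure M1 (\<Union>i. X i)"
      using finite_measure.finite_measure_UNION[OF fin(1), of X] X sets union(1) by simp
    have s3: "(\<lambda>i. measure P (X i)) sums measure P (\<Union>i. X i)"
      using finite_measure.finite_measure_UNION[OF fin(3), of X] X sets union(1) by simp
    have "(\<lambda>i. measure M1 (X i) + measure P (X i)) sums (measure M1 (\<Union>i. X i) + measure P (\<Union>i. X i))"
      using sums_add[OF s1 s3] .
    moreover have "(\<lambda>i. measure M1 (X i) + measure P (X i)) = (\<lambda>i. measure M2 (X i))"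
      using union(3) by simp
    ultimately show ?case using s2 sums_unique2 by metis
  qed
qed

lemma density_Ioc:
  fixes N :: "real measure"
  assumes "sets N = sets borel"
  shows "emeasure (density N (indicator {a<..b})) {c<..d} = emeasure N {max a c<..min b d}"
proof -
  have "emeasure (density N (indicator {a<..b})) {c<..d} = emeasure N ({a<..b} \<inter> {c<..d})"
    by (rule emeasure_restricted) (use assms in auto)
  also have "{a<..b} \<inter> {c<..d} = {max a c<..min b d}" by auto
  finally show ?thesis .
qed

lemma density_UNIV:
  fixes N :: "real measure"
  assumes "sets N = sets borel"
  shows "emeasure (density N (indicator {a<..b})) UNIV = emeasure N {a<..b}"
proof -
  have "emeasure (density N (indicator {a<..b})) UNIV = emeasure N ({a<..b} \<inter> UNIV)"
    by (rule emeasure_restricted) (use assms in auto)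
  then show ?thesis by simp
qed

lemma compare_local:
  fixes F G :: "real \<Rightarrow> real" and f :: "real \<Rightarrow> ennreal"
  assumes F: "mono F" "(F \<longlongrightarrow> 0) at_bot" "(F \<longlongrightarrow> 1) at_top"
  and G: "mono G" "(G \<longlongrightarrow> 0) at_bot" "(G \<longlongrightarrow> 1) at_top"
  and disp: "\<And>u v. 0 < u \<Longrightarrow> u \<le> v \<Longrightarrow> v < 1 \<Longrightarrow>
      Sup {x. F x \<le> v} - Sup {x. F x \<le> u} \<le> Sup {x. G x \<le> v} - Sup {x. G x \<le> u}"
  and f: "f \<in> borel_measurable borel"
  and ab: "0 < a" "a \<le> b" "b < 1"
  shows "(\<integral>\<^sup>+u. indicator {a<..b} u * f u \<partial>distr lborel borel F)
       \<le> (\<integral>\<^sup>+u. indicator {a<..b} u * f u \<partial>distr lborel borel G)"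
proof -
  define QF where "QF u = Sup {x. F x \<le> u}" for u
  define QG where "QG u = Sup {x. G x \<le> u}" for u
  define D where "D u = QG u - QF u" for u
  define R where "R u = D (max a (min b u))" for u
  have Fm[measurable]: "F \<in> borel_measurable borel" using borel_measurable_mono F(1) by blast
  have Gm[measurable]: "G \<in> borel_measurable borel" using borel_measurable_mono G(1) by blast
  have Dmono: "D u \<le> D v" if "0 < u" "u \<le> v" "v < 1" for u v
    using disp[OF that] unfolding D_def QF_def QG_def by simp
  have Rmono: "R x \<le> R y" if "x \<le> y" for x y
    unfolding R_def by (rule Dmono) (use that ab in auto)
  have Rrc': "\<forall>e>0. \<exists>\<delta>>0. R (u + \<delta>) - R u < e" for u
  proof (intro allI impI)
    fix e :: real assume e: "e > 0"
    show "\<exists>\<delta>>0. R (u + \<delta>) - R u < e"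
    proof (cases "b \<le> u")
      case True
      then have "R (u + 1) = R u" unfolding R_def by simp
      then show ?thesis using e by (intro exI[of _ 1]) auto
    next
      case nb: False
      show ?thesis
      proof (cases "u < a")
        case True
        then have "R (u + (a - u)) = R u" unfolding R_def by simp
        then show ?thesis using e True by (intro exI[of _ "a - u"]) auto
      next
        case na: False
        obtain d where d: "d > 0" "u + d < 1" "QG (u + d) - QG u < e"
          using Qrc[OF G, of u e] na nb ab e unfolding QG_def by auto
        define \<delta> where "\<delta> = min d (b - u)"
        have \<delta>: "\<delta> > 0" "\<delta> \<le> d" "u + \<delta> \<le> b" using d nb unfolding \<delta>_def by auto
        have "R (u + \<delta>) - R u = D (u + \<delta>) - D u"
          unfolding R_def using \<delta> na by (simp add: max_def min_def)
        also have "\<dots> = (QG (u + \<delta>) - QG u) - (QF (u + \<delta>) - QF u)" unfolding D_def by simp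
        also have "\<dots> \<le> QG (u + \<delta>) - QG u"
          using Qmono[OF F, of u "u + \<delta>"] \<delta> na ab unfolding QF_def by auto
        also have "\<dots> \<le> QG (u + d) - QG u"
          using Qmono[OF G, of "u + \<delta>" "u + d"] \<delta> d na ab unfolding QG_def by auto
        finally show ?thesis using d \<delta> by (intro exI[of _ \<delta>]) auto
      qed
    qed
  qed
  have Rrc: "continuous (at_right u) R" for u
    using continuous_at_right_real_increasing[of R u] Rmono Rrc'[of u] by blast
  let ?I = "{a<..b}"
  define M1 where "M1 = density (distr lborel borel F) (indicator ?I)"
  define M2 where "M2 = density (distr lborel borel G) (indicator ?I)"
  define P where "P = density (interval_measure R) (indicator ?I)"
  have sets: "sets M1 = sets borel" "sets M2 = sets borel" "sets P = sets borel"
    unfolding M1_def M2_def P_def by auto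
  have eF: "emeasure (distr lborel borel F) {c<..d} = ennreal (QF d - QF c)"
     if "0 < c" "c \<le> d" "d < 1" for c d
    using Q_Ioc[OF F that] unfolding QF_def .
  have eG: "emeasure (distr lborel borel G) {c<..d} = ennreal (QG d - QG c)"
     if "0 < c" "c \<le> d" "d < 1" for c d
    using Q_Ioc[OF G that] unfolding QG_def .
  have eP: "emeasure (interval_measure R) {c<..d} = ennreal (D d - D c)"
     if "a \<le> c" "c \<le> d" "d \<le> b" for c d
  proof -
    have "emeasure (interval_measure R) {c<..d} = ennreal (R d - R c)"
      using emeasure_interval_measure_Ioc[OF that(2) Rmono Rrc] by simp
    moreover have "R d = D d" "R c = D c" unfolding R_def using that by auto
    ultimately show ?thesis by simp
  qed
  have QFm: "QF c \<le> QF d" if "0 < c" "c \<le> d" "d < 1" for c d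
    using Qmono[OF F that] unfolding QF_def .
  have QGm: "QG c \<le> QG d" if "0 < c" "c \<le> d" "d < 1" for c d
    using Qmono[OF G that] unfolding QG_def .
  have key: "emeasure M1 {c<..d} = ennreal (QF d - QF c) \<and> emeasure M2 {c<..d} = ennreal (QG d - QG c)
     \<and> emeasure P {c<..d} = ennreal (D d - D c)" if "a \<le> c" "c \<le> d" "d \<le> b" for c d
  proof -
    have "max a c = c" "min b d = d" using that by auto
    then show ?thesis unfolding M1_def M2_def P_def
      using density_Ioc[of "distr lborel borel F" a b c d] density_Ioc[of "distr lborel borel G" a b c d]
        density_Ioc[of "interval_measure R" a b c d] eF[of c d] eG[of c d] eP[OF that] that ab
      by simp
  qed
  have Mfin: "emeasure M1 UNIV = ennreal (QF b - QF a)" "emeasure M2 UNIV = ennreal (QG b - QG a)"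
     "emeasure P UNIV = ennreal (D b - D a)"
    unfolding M1_def M2_def P_def
    using density_UNIV[of "distr lborel borel F" a b] density_UNIV[of "distr lborel borel G" a b]
      density_UNIV[of "interval_measure R" a b] eF[of a b] eG[of a b] eP[of a b] ab by auto
  have fin: "finite_measure M1" "finite_measure M2" "finite_measure P"
    using Mfin sets[THEN sets_eq_imp_space_eq] by (auto intro!: finite_measureI)
  have Ioc: "measure M2 {c<..d} = measure M1 {c<..d} + measure P {c<..d}" for c d
  proof (cases "max a c \<le> min b d")
    case True
    have k: "emeasure M1 {max a c<..min b d} = ennreal (QF (min b d) - QF (max a c))"
        "emeasure M2 {max a c<..min b d} = ennreal (QG (min b d) - QG (max a c))"
        "emeasure P {max a c<..min b d} = ennreal (D (min b d) - D (max a c))"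
      using key[of "max a c" "min b d"] True by auto
    have same: "emeasure K {c<..d} = emeasure K {max a c<..min b d}" if "K = density N (indicator ?I)"
      "sets N = sets borel" for K N
      using that density_Ioc[of N a b c d] density_Ioc[of N a b "max a c" "min b d"]
      by (simp add: max.assoc[symmetric] min.assoc[symmetric])
    have s: "emeasure M1 {c<..d} = emeasure M1 {max a c<..min b d}"
      "emeasure M2 {c<..d} = emeasure M2 {max a c<..min b d}"
      "emeasure P {c<..d} = emeasure P {max a c<..min b d}"
      by (rule same, simp add: M1_def M2_def P_def, simp)+
    have nn: "0 \<le> QF (min b d) - QF (max a c)" "0 \<le> QG (min b d) - QG (max a c)"
      "0 \<le> D (min b d) - D (max a c)"
      using QFm[of "max a c" "min b d"] QGm[of "max a c" "min b d"] Dmono[of "max a c" "min b d"] True ab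
      by auto
    show ?thesis unfolding measure_def s k using nn by (simp add: D_def)
  next
    case False
    then have e: "{max a c<..min b d} = {}" by auto
    have "emeasure K {c<..d} = 0" if "K = density N (indicator ?I)"
      "sets N = sets borel" for K N
      using that density_Ioc[of N a b c d] e by simp
    then have "emeasure M1 {c<..d} = 0" "emeasure M2 {c<..d} = 0" "emeasure P {c<..d} = 0"
      unfolding M1_def M2_def P_def by auto
    then show ?thesis by (simp add: measure_def)
  qed
  have univ: "measure M2 UNIV = measure M1 UNIV + measure P UNIV"
  proof -
    have nn: "0 \<le> QF b - QF a" "0 \<le> QG b - QG a" "0 \<le> D b - D a"
      using QFm[of a b] QGm[of a b] Dmono[of a b] ab by auto
    show ?thesis unfolding measure_def Mfin using nn by (simp add: D_def)
  qed
  have le: "M1 \<le> M2"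
  proof -
    have "emeasure M1 A \<le> emeasure M2 A" for A
    proof (cases "A \<in> sets borel")
      case True
      have "measure M2 A = measure M1 A + measure P A"
        by (rule dynkin_sum[OF sets fin Ioc univ True])
      then have "measure M1 A \<le> measure M2 A" by (simp add: measure_nonneg)
      then show ?thesis
        using finite_measure.emeasure_eq_measure[OF fin(1)] finite_measure.emeasure_eq_measure[OF fin(2)]
        by simp
    next
      case False
      then show ?thesis using sets by (simp add: emeasure_notin_sets)
    qed
    moreover have "space M1 = space M2" using sets[THEN sets_eq_imp_space_eq] by simp
    ultimately show ?thesis using sets by (simp add: le_measure_iff le_fun_def)
  qed
  have "(\<integral>\<^sup>+u. f u \<partial>M1) \<le> (\<integral>\<^sup>+u. f u \<partial>M2)"
    by (rule nn_integral_mono_measure) (use sets le in auto)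
  moreover have "(\<integral>\<^sup>+u. f u \<partial>M1) = (\<integral>\<^sup>+u. indicator {a<..b} u * f u \<partial>distr lborel borel F)"
    unfolding M1_def by (rule nn_integral_density) (use f in auto)
  moreover have "(\<integral>\<^sup>+u. f u \<partial>M2) = (\<integral>\<^sup>+u. indicator {a<..b} u * f u \<partial>distr lborel borel G)"
    unfolding M2_def by (rule nn_integral_density) (use f in auto)
  ultimately show ?thesis by simp
qed

lemma compare_global:
  fixes F G :: "real \<Rightarrow> real" and f :: "real \<Rightarrow> ennreal"
  assumes F: "mono F" "(F \<longlongrightarrow> 0) at_bot" "(F \<longlongrightarrow> 1) at_top"
  and G: "mono G" "(G \<longlongrightarrow> 0) at_bot" "(G \<longlongrightarrow> 1) at_top"
  and disp: "\<And>u v. 0 < u \<Longrightarrow> u \<le> v \<Longrightarrow> v < 1 \<Longrightarrow>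
      Sup {x. F x \<le> v} - Sup {x. F x \<le> u} \<le> Sup {x. G x \<le> v} - Sup {x. G x \<le> u}"
  and f[measurable]: "f \<in> borel_measurable borel"
  and f0: "\<And>u. u \<le> 0 \<or> 1 \<le> u \<Longrightarrow> f u = 0"
  shows "(\<integral>\<^sup>+x. f (F x) \<partial>lborel) \<le> (\<integral>\<^sup>+x. f (G x) \<partial>lborel)"
proof -
  have Fm[measurable]: "F \<in> borel_measurable borel" using borel_measurable_mono F(1) by blast
  have Gm[measurable]: "G \<in> borel_measurable borel" using borel_measurable_mono G(1) by blast
  define a where "a n = 1 / (real n + 3)" for n :: nat
  define g where "g n u = indicator {a n<..1 - a n} u * f u" for n u
  have a: "0 < a n" "a n \<le> 1 - a n" "1 - a n < 1" for n
    unfolding a_def by (auto simp: field_simps)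
  have amono: "a n \<le> a m" if "m \<le> n" for m n
    unfolding a_def using that by (auto simp: field_simps)
  have inc: "incseq g"
  proof (rule incseq_SucI, rule le_funI)
    fix n u
    show "g n u \<le> g (Suc n) u"
      using amono[of n "Suc n"] unfolding g_def by (auto simp: indicator_def)
  qed
  have gm[measurable]: "g n \<in> borel_measurable borel" for n unfolding g_def by measurable
  have sup: "(SUP n. g n u) = f u" for u
  proof (cases "0 < u \<and> u < 1")
    case True
    obtain n :: nat where n: "1 / min u (1 - u) < real n"
      using reals_Archimedean2 by blast
    have mpos: "0 < min u (1 - u)" using True by auto
    have "a n < min u (1 - u)"
    proof -
      obtain m where m: "m = min u (1 - u)" by blast
      have mp: "0 < m" using mpos m by simp
      have "1 < real n * m" using n mp m by (simp add: divide_less_eq)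
      then have "1 < m * (real n + 3)" using mp by (simp add: algebra_simps)
      then have "1 / (real n + 3) < m" by (simp add: divide_less_eq)
      then show ?thesis unfolding a_def m .
    qed
    then have "g n u = f u" unfolding g_def by auto
    moreover have "g m u \<le> f u" for m unfolding g_def by (auto simp: indicator_def)
    ultimately show ?thesis by (intro antisym SUP_least) (auto intro: SUP_upper2[of n])
  next
    case False
    then have "f u = 0" using f0 by auto
    then show ?thesis unfolding g_def by simp
  qed
  have "(\<integral>\<^sup>+x. f (F x) \<partial>lborel) = (\<integral>\<^sup>+u. f u \<partial>distr lborel borel F)"
    by (simp add: nn_integral_distr)
  also have "\<dots> = (\<integral>\<^sup>+u. (SUP n. g n u) \<partial>distr lborel borel F)" using sup by simp
  also have "\<dots> = (SUP n. \<integral>\<^sup>+u. g n u \<partial>distr lborel borel F)"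
    by (rule nn_integral_monotone_convergence_SUP) (use inc in auto)
  also have "\<dots> \<le> (\<integral>\<^sup>+u. f u \<partial>distr lborel borel G)"
  proof (rule SUP_least)
    fix n
    have "(\<integral>\<^sup>+u. g n u \<partial>distr lborel borel F) \<le> (\<integral>\<^sup>+u. g n u \<partial>distr lborel borel G)"
      unfolding g_def by (rule compare_local[OF F G disp f a])
    also have "\<dots> \<le> (\<integral>\<^sup>+u. f u \<partial>distr lborel borel G)"
      by (rule nn_integral_mono) (auto simp: g_def indicator_def)
    finally show "(\<integral>\<^sup>+u. g n u \<partial>distr lborel borel F) \<le> (\<integral>\<^sup>+u. f u \<partial>distr lborel borel G)" .
  qed
  also have "\<dots> = (\<integral>\<^sup>+x. f (G x) \<partial>lborel)"
    by (simp add: nn_integral_distr)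
  finally show ?thesis .
qed

definition cl :: "real \<Rightarrow> real" where "cl u = max 0 (min 1 u)"

definition hh :: "(real \<Rightarrow> real) \<Rightarrow> (real \<Rightarrow> real) \<Rightarrow> real \<Rightarrow> ennreal" where
  "hh q1 q2 u = ennreal (q1 (cl u) * q2 (cl (1 - u)))"

lemma cl_mono: "mono cl" unfolding cl_def mono_def by auto

lemma dist_mono: "distortion q \<Longrightarrow> mono (\<lambda>u. q (cl u))"
  unfolding distortion_def mono_def mono_on_def cl_def by auto

lemma hh_meas: "distortion q1 \<Longrightarrow> distortion q2 \<Longrightarrow> hh q1 q2 \<in> borel_measurable borel"
proof -
  assume d: "distortion q1" "distortion q2"
  have m1[measurable]: "(\<lambda>u. q1 (cl u)) \<in> borel_measurable borel" using borel_measurable_mono dist_mono[OF d(1)] by blast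
  have m2[measurable]: "(\<lambda>u. q2 (cl u)) \<in> borel_measurable borel" using borel_measurable_mono dist_mono[OF d(2)] by blast
  have m3: "(\<lambda>u. q2 (cl (1 - u))) \<in> borel_measurable borel"
    using measurable_compose[OF _ m2, of "\<lambda>u. 1 - u" borel] by simp
  show ?thesis unfolding hh_def using m1 m3 by measurable
qed

lemma hh0: "distortion q1 \<Longrightarrow> distortion q2 \<Longrightarrow> u \<le> 0 \<or> 1 \<le> u \<Longrightarrow> hh q1 q2 u = 0"
  unfolding hh_def distortion_def cl_def by (auto simp: max_def min_def)

lemma hh_eq: "0 \<le> u \<Longrightarrow> u \<le> 1 \<Longrightarrow> hh q1 q2 u = ennreal (q1 u * q2 (1 - u))"
  unfolding hh_def cl_def by simp

lemma subsingleton_finite: "(\<And>x y. x \<in> E \<Longrightarrow> y \<in> E \<Longrightarrow> x = y) \<Longrightarrow> finite E"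
proof (cases "E = {}")
  case False
  assume h: "\<And>x y. x \<in> E \<Longrightarrow> y \<in> E \<Longrightarrow> x = y"
  obtain x where "x \<in> E" using False by auto
  then have "E \<subseteq> {x}" using h by auto
  then show ?thesis using finite_subset by blast
qed simp

lemma gini_as_hh:
  fixes F :: "real \<Rightarrow> real"
  assumes "mono F" "\<And>x. 0 \<le> F x" "\<And>x. F x \<le> 1" "distortion q1" "distortion q2"
  shows "(\<integral>\<^sup>+x \<in> {x. Inf {ereal y | y. F y > 0} < ereal x \<and> ereal x < Sup {ereal y | y. 1 - F y > 0}}.
            ennreal (q1 (F x) * q2 (1 - F x)) \<partial>lborel) = (\<integral>\<^sup>+x. hh q1 q2 (F x) \<partial>lborel)"
proof (rule nn_integral_cong_AE)
  let ?S = "{ereal y | y. F y > 0}" and ?T = "{ereal y | y. 1 - F y > 0}"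
  let ?E1 = "{x. (\<forall>y<x. F y \<le> 0) \<and> 0 < F x}" and ?E2 = "{x. (\<forall>y>x. 1 \<le> F y) \<and> F x < 1}"
  have f1: "finite ?E1"
    by (rule subsingleton_finite) (metis (mono_tags, lifting) linorder_neqE_linordered_idom mem_Collect_eq not_le)
  have f2: "finite ?E2"
    by (rule subsingleton_finite) (metis (mono_tags, lifting) linorder_neqE_linordered_idom mem_Collect_eq not_le)
  have null: "?E1 \<union> ?E2 \<in> null_sets lborel"
    using f1 f2 by (intro countable_imp_null_set_lborel countable_finite) auto
  show "AE x in lborel. ennreal (q1 (F x) * q2 (1 - F x)) * indicator {x. Inf ?S < ereal x \<and> ereal x < Sup ?T} x
      = hh q1 q2 (F x)"
  proof (rule AE_I'[OF null], rule subsetI)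
    fix x
    assume xin: "x \<in> {x \<in> space lborel. \<not> (ennreal (q1 (F x) * q2 (1 - F x)) * indicator {x. Inf ?S < ereal x \<and> ereal x < Sup ?T} x
      = hh q1 q2 (F x))}"
    then have ne: "ennreal (q1 (F x) * q2 (1 - F x)) * indicator {x. Inf ?S < ereal x \<and> ereal x < Sup ?T} x
      \<noteq> hh q1 q2 (F x)" by simp
    have hx: "hh q1 q2 (F x) = ennreal (q1 (F x) * q2 (1 - F x))" using hh_eq assms(2,3) by blast
    have notD: "\<not> (Inf ?S < ereal x \<and> ereal x < Sup ?T)"
      using ne hx by (auto simp: indicator_def)
    have nz: "q1 (F x) * q2 (1 - F x) \<noteq> 0"
      using ne hx notD by (auto simp: indicator_def)
    have Fx0: "F x \<noteq> 0" using nz assms(4) unfolding distortion_def by auto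
    have Fx1: "F x \<noteq> 1" using nz assms(5) unfolding distortion_def by auto
    show "x \<in> ?E1 \<union> ?E2"
    proof (cases "Inf ?S < ereal x")
      case False
      have "F y \<le> 0" if "y < x" for y
      proof (rule ccontr)
        assume "\<not> F y \<le> 0"
        then have "ereal y \<in> ?S" by auto
        then have "Inf ?S \<le> ereal y" by (rule Inf_lower)
        then show False using False that by (meson ereal_less(3) not_le order_le_less_trans ereal_less_eq(3) less_ereal.simps(1))
      qed
      then show ?thesis using Fx0 assms(2)[of x] by (auto simp: less_le)
    next
      case True
      then have nT: "\<not> ereal x < Sup ?T" using notD by auto
      have "1 \<le> F y" if "x < y" for y
      proof (rule ccontr)
        assume "\<not> 1 \<le> F y"
        then have "ereal y \<in> ?T" by auto
        then have "ereal y \<le> Sup ?T" by (rule Sup_upper)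
        then show False using nT that by (meson less_ereal.simps(1) order_less_le_trans)
      qed
      then have "x \<in> ?E2" using Fx1 assms(3)[of x] by (auto simp: less_le)
      then show ?thesis by blast
    qed
  qed
qed

lemma cdfX_props:
  assumes "prob_space M" "X \<in> borel_measurable M"
  shows "mono (cdfX M X)" "\<And>x. 0 \<le> cdfX M X x" "\<And>x. cdfX M X x \<le> 1"
    "(cdfX M X \<longlongrightarrow> 0) at_bot" "(cdfX M X \<longlongrightarrow> 1) at_top"
proof -
  interpret prob_space M by fact
  have rd: "real_distribution (distr M borel X)" using assms(2) by simp
  have fb: "finite_borel_measure (distr M borel X)" using real_distribution.finite_borel_measure_M[OF rd] .
  have eq: "cdfX M X = cdf (distr M borel X)"
  proof
    fix x
    have "cdf (distr M borel X) x = measure M (X -` {..x} \<inter> space M)"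
      unfolding cdf_def by (rule measure_distr) (use assms in auto)
    also have "X -` {..x} \<inter> space M = {\<omega> \<in> space M. X \<omega> \<le> x}" by auto
    finally show "cdfX M X x = cdf (distr M borel X) x" unfolding cdfX_def by simp
  qed
  show "mono (cdfX M X)" unfolding eq mono_def
    using finite_borel_measure.cdf_nondecreasing[OF fb] by blast
  show "\<And>x. 0 \<le> cdfX M X x" unfolding eq using finite_borel_measure.cdf_nonneg[OF fb] by blast
  show "\<And>x. cdfX M X x \<le> 1" unfolding eq using real_distribution.cdf_bounded_prob[OF rd] by blast
  show "(cdfX M X \<longlongrightarrow> 0) at_bot" unfolding eq using finite_borel_measure.cdf_lim_at_bot[OF fb] .
  show "(cdfX M X \<longlongrightarrow> 1) at_top" unfolding eq using real_distribution.cdf_lim_at_top_prob[OF rd] .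
qed

lemma Gini_nn_hh:
  assumes "prob_space M" "X \<in> borel_measurable M" "distortion q1" "distortion q2"
  shows "Gini_nn q1 q2 M X = (\<integral>\<^sup>+x. hh q1 q2 (cdfX M X x) \<partial>lborel)"
  unfolding Gini_nn_def lend_def rend_def
  by (rule gini_as_hh[OF cdfX_props(1-3)[OF assms(1,2)] assms(3,4)])

lemma cdfX_shift: "cdfX M (\<lambda>\<omega>. X \<omega> + \<delta>) x = cdfX M X (x - \<delta>)"
  unfolding cdfX_def by (simp add: algebra_simps)

lemma cdfX_scale: "\<gamma> > 0 \<Longrightarrow> cdfX M (\<lambda>\<omega>. \<gamma> * X \<omega>) x = cdfX M X (x / \<gamma>)"
  unfolding cdfX_def by (simp add: pos_le_divide_eq mult.commute)

theorem theorem2: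
  fixes M :: "'a measure" and N :: "'b measure"
    and X :: "'a \<Rightarrow> real" and Y :: "'b \<Rightarrow> real"
    and q1 q2 :: "real \<Rightarrow> real"
  assumes "prob_space M" and "prob_space N"
    and "X \<in> borel_measurable M" and "Y \<in> borel_measurable N"
    and "supportX M X = supportX N Y"
    and "distortion q1" and "distortion q2"
    and "Gini_nn q1 q2 M X < \<infinity>" and "Gini_nn q1 q2 N Y < \<infinity>"
  shows "(\<forall>\<delta>::real. Gini q1 q2 M (\<lambda>\<omega>. X \<omega> + \<delta>) = Gini q1 q2 M X)
       \<and> (\<forall>\<gamma>::real. \<gamma> > 0 \<longrightarrow> Gini q1 q2 M (\<lambda>\<omega>. \<gamma> * X \<omega>) = \<gamma> * Gini q1 q2 M X)
       \<and> (\<forall>Z. Z \<in> borel_measurable M \<and> (\<exists>c. AE \<omega> in M. Z \<omega> = c) \<longrightarrow> Gini q1 q2 M Z = 0)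
       \<and> (\<forall>Z. Z \<in> borel_measurable M \<longrightarrow> Gini q1 q2 M Z \<ge> 0)
       \<and> (dispersive_le M X N Y \<longrightarrow> Gini q1 q2 M X \<le> Gini q1 q2 N Y)"
proof (intro conjI allI impI)
  note PM = assms(1) and PN = assms(2) and XM = assms(3) and YM = assms(4)
  note d = assms(6,7)
  have hm[measurable]: "hh q1 q2 \<in> borel_measurable borel" using hh_meas[OF d] .
  have Fm[measurable]: "cdfX M X \<in> borel_measurable borel"
    using borel_measurable_mono cdfX_props(1)[OF PM XM] by blast
  fix \<delta> :: real
  have XdM: "(\<lambda>\<omega>. X \<omega> + \<delta>) \<in> borel_measurable M" using XM by measurable
  have "Gini_nn q1 q2 M (\<lambda>\<omega>. X \<omega> + \<delta>) = (\<integral>\<^sup>+x. hh q1 q2 (cdfX M X (x - \<delta>)) \<partial>lborel)"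
    using Gini_nn_hh[OF PM XdM d] by (simp add: cdfX_shift)
  also have "\<dots> = (\<integral>\<^sup>+x. hh q1 q2 (cdfX M X x) \<partial>lborel)"
    using nn_integral_real_affine[of "\<lambda>x. hh q1 q2 (cdfX M X x)" 1 "- \<delta>"] by simp
  also have "\<dots> = Gini_nn q1 q2 M X" using Gini_nn_hh[OF PM XM d] by simp
  finally show "Gini q1 q2 M (\<lambda>\<omega>. X \<omega> + \<delta>) = Gini q1 q2 M X" unfolding Gini_def by simp
next
  note PM = assms(1) and PN = assms(2) and XM = assms(3) and YM = assms(4)
  note d = assms(6,7)
  have hm[measurable]: "hh q1 q2 \<in> borel_measurable borel" using hh_meas[OF d] .
  have Fm[measurable]: "cdfX M X \<in> borel_measurable borel"
    using borel_measurable_mono cdfX_props(1)[OF PM XM] by blast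
  fix \<gamma> :: real assume g: "\<gamma> > 0"
  have XgM: "(\<lambda>\<omega>. \<gamma> * X \<omega>) \<in> borel_measurable M" using XM by measurable
  have "Gini_nn q1 q2 M (\<lambda>\<omega>. \<gamma> * X \<omega>) = (\<integral>\<^sup>+x. hh q1 q2 (cdfX M X (x / \<gamma>)) \<partial>lborel)"
    using Gini_nn_hh[OF PM XgM d] g by (simp add: cdfX_scale)
  also have "\<dots> = ennreal \<gamma> * (\<integral>\<^sup>+x. hh q1 q2 (cdfX M X x) \<partial>lborel)"
    using nn_integral_real_affine[of "\<lambda>x. hh q1 q2 (cdfX M X (x / \<gamma>))" \<gamma> 0] g by simp
  also have "\<dots> = ennreal \<gamma> * Gini_nn q1 q2 M X" using Gini_nn_hh[OF PM XM d] by simp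
  finally show "Gini q1 q2 M (\<lambda>\<omega>. \<gamma> * X \<omega>) = \<gamma> * Gini q1 q2 M X"
    unfolding Gini_def using g by (simp add: enn2real_mult)
next
  note PM = assms(1) and d = assms(6,7)
  fix Z :: "'a \<Rightarrow> real" assume Z: "Z \<in> borel_measurable M \<and> (\<exists>c. AE \<omega> in M. Z \<omega> = c)"
  then obtain c where c: "AE \<omega> in M. Z \<omega> = c" by blast
  have ZM[measurable]: "Z \<in> borel_measurable M" using Z by blast
  interpret prob_space M by fact
  have "cdfX M Z x = 0 \<or> cdfX M Z x = 1" for x
  proof (cases "c \<le> x")
    case True
    have "AE \<omega> in M. Z \<omega> \<le> x" using c by eventually_elim (use True in auto)
    then have "cdfX M Z x = 1" unfolding cdfX_def by (subst prob_Collect_eq_1) auto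
    then show ?thesis by simp
  next
    case False
    have "AE \<omega> in M. \<not> Z \<omega> \<le> x" using c by eventually_elim (use False in auto)
    then have "cdfX M Z x = 0" unfolding cdfX_def by (subst prob_Collect_eq_0) auto
    then show ?thesis by simp
  qed
  then have "hh q1 q2 (cdfX M Z x) = 0" for x using hh0[OF d] by (metis order_refl)
  then have "Gini_nn q1 q2 M Z = 0" using Gini_nn_hh[OF PM ZM d] by simp
  then show "Gini q1 q2 M Z = 0" unfolding Gini_def by simp
next
  fix Z :: "'a \<Rightarrow> real" show "0 \<le> Gini q1 q2 M Z" unfolding Gini_def by simp
next
  note PM = assms(1) and PN = assms(2) and XM = assms(3) and YM = assms(4)
  note d = assms(6,7)
  assume disp: "dispersive_le M X N Y"
  have "Gini_nn q1 q2 M X \<le> Gini_nn q1 q2 N Y"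
    unfolding Gini_nn_hh[OF PM XM d] Gini_nn_hh[OF PN YM d]
  proof (rule compare_global[OF cdfX_props(1,4,5)[OF PM XM] cdfX_props(1,4,5)[OF PN YM]])
    show "\<And>u v. 0 < u \<Longrightarrow> u \<le> v \<Longrightarrow> v < 1 \<Longrightarrow>
      Sup {x. cdfX M X x \<le> v} - Sup {x. cdfX M X x \<le> u} \<le> Sup {x. cdfX N Y x \<le> v} - Sup {x. cdfX N Y x \<le> u}"
      using disp unfolding dispersive_le_def quantile_def by blast
    show "hh q1 q2 \<in> borel_measurable borel" using hh_meas[OF d] .
    show "\<And>u. u \<le> 0 \<or> 1 \<le> u \<Longrightarrow> hh q1 q2 u = 0" using hh0[OF d] .
  qed
  then show "Gini q1 q2 M X \<le> Gini q1 q2 N Y"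
    unfolding Gini_def using assms(9) by (intro enn2real_mono) auto
qed

end
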